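(* Let $d\ge0$ and $n>d$ be integers, and let $T_1\subset\{1,\dots,n\}$ be such that $\{T_1\}\in L(n,d)$. Then the poset ideal $\mathcal{I}_{n,d}(\{T_1\})$ is isomorphic as a poset to $L(n-|T_1|,\,d-|T_1|)$.
   Context: For a finite set $X$ let $\operatorname{codim}_d(X)=d+1-|X|$. For a finite collection $\{T_1,\dots,T_l\}$ of pairwise distinct finite sets put $\rho_d(\{T_1,\dots,T_l\})=\sum_{i=1}^l\operatorname{codim}_d(T_i)$ (with $\rho_d(\emptyset)=0$) and $D_d(\{T_1,\dots,T_l\})=\operatorname{codim}_d(T_1\cap\cdots\cap T_l)-\rho_d(\{T_1,\dots,T_l\})$. For integers $d\ge0$, $n>d$, $L(n,d)$ is the set of all collections $T$ of subsets of $\{1,\dots,n\}$ such that (i) $D_d(T')>0$ for every $T'\subset T$ with $|T'|>1$, and (ii) $0\le|T_i|\le d$ for every $T_i\in T$ (so $L(n,0)=\{\emptyset,\{\emptyset\}\}$). It is partially ordered by: $T<T'$ iff $\rho_d(T)<\rho_d(T')$ and for every $T_i\in T$ there exists $T'_j\in T'$ with $T'_j\subset T_i$; $T\le T'$ means $T<T'$ or $T=T'$. For $T\in L(n,d)$, $\mathcal{I}_{n,d}(T)=\{S\in L(n,d): S\le T\}$ with the induced order. *)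

theory Defs
  imports Main
begin

definition codim :: "nat \<Rightarrow> nat set \<Rightarrow> int" where
  "codim d X = int d + 1 - int (card X)"

definition rho :: "nat \<Rightarrow> nat set set \<Rightarrow> int" where
  "rho d T = (\<Sum>X\<in>T. codim d X)"

definition Dd :: "nat \<Rightarrow> nat set set \<Rightarrow> int" where
  "Dd d T = codim d (\<Inter>T) - rho d T"

definition Lnd :: "nat \<Rightarrow> nat \<Rightarrow> nat set set set" where
  "Lnd n d = {T. (\<forall>X\<in>T. X \<subseteq> {1..n} \<and> card X \<le> d) \<and>
                 (\<forall>T'. T' \<subseteq> T \<and> card T' > 1 \<longrightarrow> Dd d T' > 0)}"

definition lessL :: "nat \<Rightarrow> nat set set \<Rightarrow> nat set set \<Rightarrow> bool" where
  "lessL d T T' \<longleftrightarrow> rho d T < rho d T' \<and> (\<forall>X\<in>T. \<exists>Y\<in>T'. Y \<subseteq> X)"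

definition leL :: "nat \<Rightarrow> nat set set \<Rightarrow> nat set set \<Rightarrow> bool" where
  "leL d T T' \<longleftrightarrow> lessL d T T' \<or> T = T'"

definition idealL :: "nat \<Rightarrow> nat \<Rightarrow> nat set set \<Rightarrow> nat set set set" where
  "idealL n d T = {S \<in> Lnd n d. leL d S T}"

definition poset_iso :: "'a set \<Rightarrow> ('a \<Rightarrow> 'a \<Rightarrow> bool) \<Rightarrow> 'b set \<Rightarrow> ('b \<Rightarrow> 'b \<Rightarrow> bool) \<Rightarrow> bool" where
  "poset_iso A leA B leB \<longleftrightarrow>
     (\<exists>f. bij_betw f A B \<and> (\<forall>x\<in>A. \<forall>y\<in>A. leA x y \<longleftrightarrow> leB (f x) (f y)))"

end

theory Submission
  imports Defs
begin

locale shiftS =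
  fixes n :: nat and T1 :: "nat set" and g :: "nat \<Rightarrow> nat"
  assumes T1sub: "T1 \<subseteq> {1..n}"
    and gbij: "bij_betw g ({1..n} - T1) {1..n - card T1}"
begin

definition U where "U = {X. T1 \<subseteq> X \<and> X \<subseteq> {1..n}}"
definition h where "h X = g ` (X - T1)"
definition hi where "hi Y = T1 \<union> the_inv_into ({1..n} - T1) g ` Y"

lemma ginj: "inj_on g ({1..n} - T1)"
  using gbij bij_betw_def by blast

lemma finT1: "finite T1" using T1sub finite_subset by blast

lemma L1: "X \<in> U \<Longrightarrow> hi (h X) = X"
proof -
  assume X: "X \<in> U"
  have "\<forall>x\<in>X - T1. the_inv_into ({1..n} - T1) g (g x) = x"
  proof
    fix x assume "x \<in> X - T1"
    then have "x \<in> {1..n} - T1" using X unfolding U_def by auto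
    then show "the_inv_into ({1..n} - T1) g (g x) = x" by (rule the_inv_into_f_f[OF ginj])
  qed
  then have "the_inv_into ({1..n} - T1) g ` g ` (X - T1) = X - T1"
    by (simp add: image_image)
  then show ?thesis using X unfolding U_def hi_def h_def by auto
qed

lemma tinv_in: "y \<in> {1..n - card T1} \<Longrightarrow> the_inv_into ({1..n} - T1) g y \<in> {1..n} - T1"
proof -
  assume "y \<in> {1..n - card T1}"
  then have "y \<in> g ` ({1..n} - T1)" using gbij by (simp add: bij_betw_def)
  then show ?thesis by (rule the_inv_into_into[OF ginj]) simp
qed

lemma hihS: "S \<subseteq> U \<Longrightarrow> hi ` h ` S = S"
proof -
  assume "S \<subseteq> U"
  then have "\<forall>X\<in>S. hi (h X) = X" using L1 by blast
  then show ?thesis by (simp add: image_image)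
qed

lemma L2: "Y \<subseteq> {1..n - card T1} \<Longrightarrow> h (hi Y) = Y"
proof -
  assume Y: "Y \<subseteq> {1..n - card T1}"
  have "hi Y - T1 = the_inv_into ({1..n} - T1) g ` Y"
    unfolding hi_def using Y tinv_in by auto
  moreover have "g ` the_inv_into ({1..n} - T1) g ` Y = Y"
  proof -
    have "\<forall>y\<in>Y. g (the_inv_into ({1..n} - T1) g y) = y"
    proof
      fix y assume "y \<in> Y"
      then have "y \<in> {1..n - card T1}" using Y by blast
      then show "g (the_inv_into ({1..n} - T1) g y) = y" by (rule f_the_inv_into_f_bij_betw[OF gbij])
    qed
    then show ?thesis by (simp add: image_image)
  qed
  ultimately show ?thesis unfolding h_def by simp
qed

lemma L3: "Y \<subseteq> {1..n - card T1} \<Longrightarrow> hi Y \<in> U"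
  unfolding U_def hi_def using tinv_in T1sub by auto

lemma L4: "X \<subseteq> {1..n} \<Longrightarrow> h X \<subseteq> {1..n - card T1}"
  unfolding h_def using gbij unfolding bij_betw_def by auto

lemma L5: "inj_on h U"
  by (metis L1 inj_on_inverseI)

lemma L6: "X \<in> U \<Longrightarrow> card (h X) = card X - card T1 \<and> card T1 \<le> card X"
proof -
  assume X: "X \<in> U"
  have fX: "finite X" using X unfolding U_def using finite_subset by blast
  have "card (h X) = card (X - T1)" unfolding h_def
    using X unfolding U_def by (intro card_image inj_on_subset[OF ginj]) auto
  also have "\<dots> = card X - card T1" using X finT1 unfolding U_def by (simp add: card_Diff_subset)
  finally show ?thesis using X fX unfolding U_def by (simp add: card_mono)
qed

lemma L7: "X \<in> U \<Longrightarrow> card T1 \<le> d \<Longrightarrow> codim (d - card T1) (h X) = codim d X"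
  using L6[of X] unfolding codim_def by auto

lemma L8: "S \<subseteq> U \<Longrightarrow> card T1 \<le> d \<Longrightarrow> rho (d - card T1) (h ` S) = rho d S"
proof -
  assume S: "S \<subseteq> U" and k: "card T1 \<le> d"
  have "rho (d - card T1) (h ` S) = (\<Sum>X\<in>S. codim (d - card T1) (h X))"
    unfolding rho_def using S by (intro sum.reindex[unfolded comp_def] inj_on_subset[OF L5])
  also have "\<dots> = rho d S" unfolding rho_def using S k L7 by (intro sum.cong) auto
  finally show ?thesis .
qed

lemma L9: "S \<subseteq> U \<Longrightarrow> S \<noteq> {} \<Longrightarrow> \<Inter>(h ` S) = h (\<Inter>S) \<and> \<Inter>S \<in> U"
proof -
  assume S: "S \<subseteq> U" "S \<noteq> {}"
  then obtain j where j: "j \<in> S" by auto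
  have "h (\<Inter>S) = g ` (\<Inter>X\<in>S. X - T1)" unfolding h_def using j by (intro arg_cong[where f="image g"]) auto
  also have "\<dots> = (\<Inter>X\<in>S. g ` (X - T1))"
    by (rule image_INT[OF ginj _ j]) (use S in \<open>auto simp: U_def\<close>)
  finally have "\<Inter>(h ` S) = h (\<Inter>S)" unfolding h_def by simp
  moreover have "\<Inter>S \<in> U" using S j unfolding U_def by auto
  ultimately show ?thesis by simp
qed

lemma L10: "S \<subseteq> U \<Longrightarrow> S \<noteq> {} \<Longrightarrow> card T1 \<le> d \<Longrightarrow> Dd (d - card T1) (h ` S) = Dd d S"
  unfolding Dd_def using L9 L8 L7 by simp

lemma L11: "S \<subseteq> U \<Longrightarrow> card T1 \<le> d \<Longrightarrow> (S \<in> Lnd n d \<longleftrightarrow> h ` S \<in> Lnd (n - card T1) (d - card T1))"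
proof -
  assume S: "S \<subseteq> U" and k: "card T1 \<le> d"
  have A: "(\<forall>X\<in>S. X \<subseteq> {1..n} \<and> card X \<le> d) \<longleftrightarrow>
      (\<forall>X\<in>h ` S. X \<subseteq> {1..n - card T1} \<and> card X \<le> d - card T1)"
  proof -
    have "\<forall>X\<in>S. X \<subseteq> {1..n} \<and> h X \<subseteq> {1..n - card T1} \<and> (card X \<le> d \<longleftrightarrow> card (h X) \<le> d - card T1)"
    proof
      fix X assume "X \<in> S"
      then have X: "X \<in> U" using S by blast
      then have a: "X \<subseteq> {1..n}" unfolding U_def by blast
      have b: "h X \<subseteq> {1..n - card T1}" using L4[OF a] .
      have "card X \<le> d \<longleftrightarrow> card (h X) \<le> d - card T1" using L6[OF X] k by linarith
      then show "X \<subseteq> {1..n} \<and> h X \<subseteq> {1..n - card T1} \<and> (card X \<le> d \<longleftrightarrow> card (h X) \<le> d - card T1)"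
        using a b by blast
    qed
    then show ?thesis by auto
  qed
  have B: "(\<forall>T'. T' \<subseteq> S \<and> card T' > 1 \<longrightarrow> Dd d T' > 0) \<longleftrightarrow>
      (\<forall>T'. T' \<subseteq> h ` S \<and> card T' > 1 \<longrightarrow> Dd (d - card T1) T' > 0)"
  proof
    assume H: "\<forall>T'. T' \<subseteq> S \<and> card T' > 1 \<longrightarrow> Dd d T' > 0"
    show "\<forall>T'. T' \<subseteq> h ` S \<and> card T' > 1 \<longrightarrow> Dd (d - card T1) T' > 0"
    proof (intro allI impI)
      fix T' assume T': "T' \<subseteq> h ` S \<and> card T' > 1"
      then have T'1: "T' \<subseteq> h ` S" and T'2: "card T' > 1" by (rule conjunct1, rule conjunct2)
      from T'1 obtain AA where AA: "AA \<subseteq> S" "T' = h ` AA" by (rule subset_imageE)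
      have AU: "AA \<subseteq> U" using AA(1) S by (rule subset_trans)
      have inj: "inj_on h AA" using L5 AU by (rule inj_on_subset)
      have c: "card AA > 1" using T'2 unfolding AA(2) card_image[OF inj] .
      then have ne: "AA \<noteq> {}" by (cases "AA = {}") simp_all
      have "Dd d AA > 0" using H[rule_format, OF conjI[OF AA(1) c]] .
      moreover have "Dd (d - card T1) (h ` AA) = Dd d AA" by (rule L10[OF AU ne k])
      ultimately show "Dd (d - card T1) T' > 0" unfolding AA(2) by linarith
    qed
  next
    assume H: "\<forall>T'. T' \<subseteq> h ` S \<and> card T' > 1 \<longrightarrow> Dd (d - card T1) T' > 0"
    show "\<forall>T'. T' \<subseteq> S \<and> card T' > 1 \<longrightarrow> Dd d T' > 0"
    proof (intro allI impI)
      fix AA assume AA0: "AA \<subseteq> S \<and> card AA > 1"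
      then have AA: "AA \<subseteq> S" and c: "card AA > 1" by (rule conjunct1, rule conjunct2)
      have AU: "AA \<subseteq> U" using AA S by (rule subset_trans)
      have inj: "inj_on h AA" using L5 AU by (rule inj_on_subset)
      have c2: "card (h ` AA) > 1" unfolding card_image[OF inj] by (rule c)
      have sub: "h ` AA \<subseteq> h ` S" using AA by (rule image_mono)
      have "Dd (d - card T1) (h ` AA) > 0" using H[rule_format, OF conjI[OF sub c2]] .
      moreover have ne: "AA \<noteq> {}" using c by (cases "AA = {}") simp_all
      moreover have "Dd (d - card T1) (h ` AA) = Dd d AA" by (rule L10[OF AU ne k])
      ultimately show "Dd d AA > 0" by linarith
    qed
  qed
  show ?thesis unfolding Lnd_def mem_Collect_eq by (simp only: A B)
qed

lemma hmono: "X \<in> U \<Longrightarrow> Y \<in> U \<Longrightarrow> (Y \<subseteq> X \<longleftrightarrow> h Y \<subseteq> h X)"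
proof
  assume "Y \<subseteq> X" then show "h Y \<subseteq> h X" unfolding h_def by auto
next
  assume XY: "X \<in> U" "Y \<in> U" and "h Y \<subseteq> h X"
  then have "hi (h Y) \<subseteq> hi (h X)" unfolding hi_def by auto
  then show "Y \<subseteq> X" using L1 XY by simp
qed

end

lemma rho_small:
  assumes S: "S \<in> Lnd m e" and ne: "S \<noteq> {{}}"
  shows "rho e S < int e + 1"
proof -
  have sub: "\<forall>X\<in>S. X \<subseteq> {1..m}" using S unfolding Lnd_def by blast
  have "S \<subseteq> Pow {1..m}" using sub by blast
  then have fin: "finite S" by (rule finite_subset) simp
  consider "card S = 0" | "card S = 1" | "card S > 1" by linarith
  then show ?thesis
  proof cases
    case 1 then have "S = {}" using fin by simp
    then show ?thesis unfolding rho_def by simp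
  next
    case 2 then obtain X where X: "S = {X}" using card_1_singletonE by blast
    then have "X \<noteq> {}" using ne by auto
    moreover have "finite X" using sub X finite_subset by auto
    ultimately have "card X > 0" by auto
    then show ?thesis using X unfolding rho_def codim_def by simp
  next
    case 3
    then have "Dd e S > 0" using S unfolding Lnd_def by blast
    then show ?thesis unfolding Dd_def codim_def by simp
  qed
qed

theorem lemma3p2:
  fixes n d :: nat and T1 :: "nat set"
  assumes "d < n" and "{T1} \<in> Lnd n d"
  shows "poset_iso (idealL n d {T1}) (leL d)
                   (Lnd (n - card T1) (d - card T1)) (leL (d - card T1))"
proof -
  have T1p: "T1 \<subseteq> {1..n} \<and> card T1 \<le> d" using assms(2) unfolding Lnd_def by blast
  then have T1sub: "T1 \<subseteq> {1..n}" and k: "card T1 \<le> d" by auto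
  have finT1: "finite T1" using T1sub finite_subset by blast
  have "card ({1..n} - T1) = card {1..n - card T1}"
    using T1sub finT1 by (simp add: card_Diff_subset)
  then obtain g where g: "bij_betw g ({1..n} - T1) {1..n - card T1}"
    using finite_same_card_bij by (metis finite_Diff finite_atLeastAtMost)
  interpret shiftS n T1 g using T1sub g by unfold_locales
  define e where "e = d - card T1"
  have rT1: "rho d {T1} = int d + 1 - int (card T1)" unfolding rho_def codim_def by simp
  have T1U: "T1 \<in> U" unfolding U_def using T1sub by auto
  have idealc: "S \<in> idealL n d {T1} \<longleftrightarrow> S \<subseteq> U \<and> S \<in> Lnd n d \<and> (S = {T1} \<or> rho d S < int d + 1 - int (card T1))" for S
  proof
    assume S: "S \<in> idealL n d {T1}"
    then have L: "S \<in> Lnd n d" and le: "leL d S {T1}" unfolding idealL_def by auto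
    have sub: "\<forall>X\<in>S. X \<subseteq> {1..n}" using L unfolding Lnd_def by blast
    from le have "S = {T1} \<or> (rho d S < rho d {T1} \<and> (\<forall>X\<in>S. \<exists>Y\<in>{T1}. Y \<subseteq> X))"
      unfolding leL_def lessL_def by blast
    then show "S \<subseteq> U \<and> S \<in> Lnd n d \<and> (S = {T1} \<or> rho d S < int d + 1 - int (card T1))"
    proof
      assume "S = {T1}" then show ?thesis using T1U L by simp
    next
      assume H: "rho d S < rho d {T1} \<and> (\<forall>X\<in>S. \<exists>Y\<in>{T1}. Y \<subseteq> X)"
      then have "\<forall>X\<in>S. T1 \<subseteq> X" by simp
      then have SU: "S \<subseteq> U" using sub unfolding U_def by blast
      have "rho d S < int d + 1 - int (card T1)" using H rT1 by linarith
      then show ?thesis using SU L by blast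
    qed
  next
    assume S: "S \<subseteq> U \<and> S \<in> Lnd n d \<and> (S = {T1} \<or> rho d S < int d + 1 - int (card T1))"
    have "\<forall>X\<in>S. \<exists>Y\<in>{T1}. Y \<subseteq> X" using S unfolding U_def by blast
    then have "leL d S {T1}" using S rT1 unfolding leL_def lessL_def by metis
    then show "S \<in> idealL n d {T1}" using S unfolding idealL_def by blast
  qed
  have idU: "S \<subseteq> U" if "S \<in> idealL n d {T1}" for S
    using idealc[of S, THEN iffD1, OF that] by (elim conjE)
  have idL: "S \<in> Lnd n d" if "S \<in> idealL n d {T1}" for S
    using idealc[of S, THEN iffD1, OF that] by (elim conjE)
  have LsubL: "\<forall>X\<in>S'. X \<subseteq> {1..n - card T1}" if "S' \<in> Lnd (n - card T1) e" for S'
    using that unfolding Lnd_def by blast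
  have w1: "\<forall>S\<in>idealL n d {T1}. hi ` h ` S = S"
    proof
      fix S assume "S \<in> idealL n d {T1}"
      then have "S \<subseteq> U" by (rule idU)
      then show "hi ` h ` S = S" by (rule hihS)
    qed
    have w2: "\<forall>S'\<in>Lnd (n - card T1) e. h ` hi ` S' = S'"
    proof
      fix S' assume "S' \<in> Lnd (n - card T1) e"
      then have "\<forall>X\<in>S'. h (hi X) = X" using LsubL[of S'] L2 by blast
      then show "h ` hi ` S' = S'" by (simp add: image_image)
    qed
    have w3: "image h ` idealL n d {T1} \<subseteq> Lnd (n - card T1) e"
    proof
      fix S' assume "S' \<in> image h ` idealL n d {T1}"
      then obtain S where S: "S \<in> idealL n d {T1}" "S' = h ` S" by blast
      have "S \<subseteq> U" using S(1) by (rule idU)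
      have "S \<in> Lnd n d" using S(1) by (rule idL)
      then show "S' \<in> Lnd (n - card T1) e" using L11[OF \<open>S \<subseteq> U\<close> k] e_def S(2) by simp
    qed
    have w4: "image hi ` Lnd (n - card T1) e \<subseteq> idealL n d {T1}"
    proof
      fix S assume "S \<in> image hi ` Lnd (n - card T1) e"
      then obtain S' where S': "S' \<in> Lnd (n - card T1) e" "S = hi ` S'" by auto
      have SU: "S \<subseteq> U"
      proof
        fix X assume "X \<in> S"
        then obtain Y where Y: "Y \<in> S'" "X = hi Y" using S'(2) by blast
        then have "Y \<subseteq> {1..n - card T1}" using LsubL[OF S'(1)] by blast
        then show "X \<in> U" using L3 Y(2) by simp
      qed
      have "\<forall>X\<in>S'. h (hi X) = X" using LsubL[OF S'(1)] L2 by blast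
      then have hS: "h ` S = S'" using S'(2) by (simp add: image_image)
      have SL: "S \<in> Lnd n d" using L11[OF SU k] hS S' e_def by simp
      have "S = {T1} \<or> rho d S < int d + 1 - int (card T1)"
      proof (cases "S' = {{}}")
        case True
        have "hi {} = T1" unfolding hi_def by simp
        then show ?thesis using True S' by simp
      next
        case False
        have "rho e S' < int e + 1" using rho_small[OF S'(1) False] .
        then show ?thesis using L8[OF SU k] hS k e_def by simp
      qed
      then show "S \<in> idealL n d {T1}" using idealc[of S] SU SL by blast
    qed
  have bij: "bij_betw (image h) (idealL n d {T1}) (Lnd (n - card T1) e)"
    by (rule bij_betw_byWitness[OF w1 w2 w3 w4])
  have ord: "leL d S1 S2 \<longleftrightarrow> leL e (h ` S1) (h ` S2)"
    if S1: "S1 \<in> idealL n d {T1}" and S2: "S2 \<in> idealL n d {T1}" for S1 S2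
  proof -
    have U1: "S1 \<subseteq> U" using S1 by (rule idU)
    have U2: "S2 \<subseteq> U" using S2 by (rule idU)
    have r: "rho e (h ` S1) = rho d S1" "rho e (h ` S2) = rho d S2"
      using L8 U1 U2 k e_def by auto
    have c: "(\<forall>X\<in>S1. \<exists>Y\<in>S2. Y \<subseteq> X) \<longleftrightarrow> (\<forall>X\<in>h ` S1. \<exists>Y\<in>h ` S2. Y \<subseteq> X)"
    proof
      assume H: "\<forall>X\<in>S1. \<exists>Y\<in>S2. Y \<subseteq> X"
      show "\<forall>X\<in>h ` S1. \<exists>Y\<in>h ` S2. Y \<subseteq> X"
      proof
        fix X' assume "X' \<in> h ` S1"
        then obtain X where X: "X \<in> S1" "X' = h X" by blast
        then obtain Y where Y: "Y \<in> S2" "Y \<subseteq> X" using H by blast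
        have "h Y \<subseteq> h X" using Y(2) unfolding h_def by blast
        then show "\<exists>Y\<in>h ` S2. Y \<subseteq> X'" using X Y by blast
      qed
    next
      assume H: "\<forall>X\<in>h ` S1. \<exists>Y\<in>h ` S2. Y \<subseteq> X"
      show "\<forall>X\<in>S1. \<exists>Y\<in>S2. Y \<subseteq> X"
      proof
        fix X assume X: "X \<in> S1"
        then obtain Y' where Y': "Y' \<in> h ` S2" "Y' \<subseteq> h X" using H by blast
        then obtain Y where Y: "Y \<in> S2" "Y' = h Y" by blast
        have "Y \<subseteq> X" using hmono[of X Y] X Y Y' U1 U2 by blast
        then show "\<exists>Y\<in>S2. Y \<subseteq> X" using Y by blast
      qed
    qed
    have eq: "S1 = S2 \<longleftrightarrow> h ` S1 = h ` S2"
    proof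
      assume "S1 = S2" then show "h ` S1 = h ` S2" by simp
    next
      assume H: "h ` S1 = h ` S2"
      have "S1 = hi ` h ` S1" using hihS[OF U1] by simp
      also have "\<dots> = hi ` h ` S2" using H by simp
      also have "\<dots> = S2" using hihS[OF U2] .
      finally show "S1 = S2" .
    qed
    show ?thesis unfolding leL_def lessL_def by (simp only: r c eq)
  qed
  have ord': "\<forall>x\<in>idealL n d {T1}. \<forall>y\<in>idealL n d {T1}. leL d x y \<longleftrightarrow> leL (d - card T1) (h ` x) (h ` y)"
    using ord unfolding e_def by blast
  have bij': "bij_betw (image h) (idealL n d {T1}) (Lnd (n - card T1) (d - card T1))"
    using bij unfolding e_def .
  show ?thesis unfolding poset_iso_def using bij' ord' by blast
qed

end
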